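(* Let $P$ be a Poisson tensor on $\mathbb{R}^3$, let $H\in C^\infty(\mathbb{R}^3)$, let $S\in C^\infty(\mathbb{R}^3)$ satisfy $PdS=0$, and let $g$ be the symmetric tensor with components $g^{ij}=H^iH^j-\delta^{ij}\sum_k H^kH^k$. Let $\xi=PdH+gdS$ and $\xi_P=PdH$. Then for $x\in\mathbb{R}^3$, $\xi(x)=\xi_P(x)$ if and only if either $d_xH=0$, or $x$ is a critical point of the restriction of $S$ to the level surface $\{H=H(x)\}$.
   Context: $\mathbb{R}^3$ carries the standard Euclidean metric, used to identify tangent and cotangent spaces with $\mathbb{R}^3$; $H^i=H_i=\partial H/\partial x^i$. A Poisson tensor is a skew-symmetric bivector field satisfying the Jacobi identity. *)

theory Defs
  imports "HOL-Analysis.Analysis"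
begin

definition partial :: "(real^3 \<Rightarrow> real) \<Rightarrow> 3 \<Rightarrow> real^3 \<Rightarrow> real" where
  "partial f i x = frechet_derivative f (at x) (axis i 1)"

fun Ck :: "nat \<Rightarrow> (real^3 \<Rightarrow> real) \<Rightarrow> bool" where
  "Ck 0 f = continuous_on UNIV f"
| "Ck (Suc k) f = (continuous_on UNIV f \<and> (\<forall>x. f differentiable (at x)) \<and> (\<forall>i. Ck k (partial f i)))"

definition smooth :: "(real^3 \<Rightarrow> real) \<Rightarrow> bool" where
  "smooth f = (\<forall>k. Ck k f)"

text \<open>Gradient (= differential under the Euclidean identification).\<close>
definition grad :: "(real^3 \<Rightarrow> real) \<Rightarrow> real^3 \<Rightarrow> real^3" where
  "grad f x = (\<chi> i. partial f i x)"

definition poisson_tensor :: "(real^3 \<Rightarrow> real^3^3) \<Rightarrow> bool" where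
  "poisson_tensor P \<longleftrightarrow>
     (\<forall>i j. smooth (\<lambda>x. P x $ i $ j)) \<and>
     (\<forall>x i j. P x $ i $ j = - P x $ j $ i) \<and>
     (\<forall>x i j k.
        (\<Sum>l\<in>UNIV. P x $ i $ l * partial (\<lambda>y. P y $ j $ k) l x
                  + P x $ j $ l * partial (\<lambda>y. P y $ k $ i) l x
                  + P x $ k $ l * partial (\<lambda>y. P y $ i $ j) l x) = 0)"

definition gtensor :: "(real^3 \<Rightarrow> real) \<Rightarrow> real^3 \<Rightarrow> real^3^3" where
  "gtensor H x = (\<chi> i j. grad H x $ i * grad H x $ j
                        - (if i = j then 1 else 0) * (\<Sum>k\<in>UNIV. grad H x $ k * grad H x $ k))"

definition crit_on_level :: "(real^3 \<Rightarrow> real) \<Rightarrow> (real^3 \<Rightarrow> real) \<Rightarrow> real^3 \<Rightarrow> bool" where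
  "crit_on_level S H x \<longleftrightarrow>
     (\<forall>\<gamma> v. \<gamma> 0 = x \<and> (\<forall>t. H (\<gamma> t) = H x) \<and> (\<gamma> has_vector_derivative v) (at 0)
        \<longrightarrow> ((S \<circ> \<gamma>) has_real_derivative 0) (at 0))"

end

theory Submission
  imports Defs
begin

lemma smooth_diff: "smooth f \<Longrightarrow> f differentiable (at y)"
proof -
  assume "smooth f"
  then have "Ck (Suc 0) f" unfolding smooth_def by blast
  then show ?thesis by simp
qed

lemma smooth_cont: "smooth f \<Longrightarrow> continuous_on UNIV f"
  unfolding smooth_def by (metis Ck.simps(1))

lemma linear_vec3: "linear f \<Longrightarrow> f h = (\<chi> i. f (axis i 1)) \<bullet> (h::real^'n)"
proof -
  assume l: "linear f"
  have "f h = f (\<Sum>i\<in>UNIV. (h$i) *s axis i 1)" by (simp add: basis_expansion)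
  also have "\<dots> = (\<Sum>i\<in>UNIV. h$i * f (axis i 1))"
    using l by (simp add: linear_sum linear_scale scalar_mult_eq_scaleR)
  also have "\<dots> = (\<chi> i. f (axis i 1)) \<bullet> h" by (simp add: inner_vec_def mult.commute)
  finally show ?thesis .
qed

lemma grad_deriv: "smooth f \<Longrightarrow> (f has_derivative (\<lambda>h. grad f y \<bullet> h)) (at y)"
proof -
  assume s: "smooth f"
  have d: "(f has_derivative frechet_derivative f (at y)) (at y)"
    using smooth_diff[OF s] frechet_derivative_works by blast
  have "linear (frechet_derivative f (at y))"
    using d has_derivative_linear by blast
  then have "frechet_derivative f (at y) = (\<lambda>h. grad f y \<bullet> h)"
    by (intro ext, subst linear_vec3[of "frechet_derivative f (at y)"]) (simp_all add: grad_def partial_def)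
  with d show ?thesis by simp
qed

lemma gt: "gtensor H x *v w = (grad H x \<bullet> w) *\<^sub>R grad H x - (grad H x \<bullet> grad H x) *\<^sub>R w"
proof -
  define a where "a = grad H x"
  have "(gtensor H x *v w) $ i = ((a \<bullet> w) *\<^sub>R a - (a \<bullet> a) *\<^sub>R w) $ i" for i
  proof -
    have "(gtensor H x *v w) $ i = (\<Sum>j\<in>UNIV. a$i * a$j * w$j - (if i = j then (a \<bullet> a) * w$j else 0))"
      unfolding gtensor_def matrix_vector_mult_def a_def[symmetric]
      apply simp by (intro sum.cong refl) (simp add: inner_vec_def left_diff_distrib)
    also have "\<dots> = a$i * (\<Sum>j\<in>UNIV. a$j * w$j) - (a \<bullet> a) * w$i"
      by (simp add: sum_subtractf sum_distrib_left mult.assoc)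
    also have "\<dots> = ((a \<bullet> w) *\<^sub>R a - (a \<bullet> a) *\<^sub>R w) $ i"
      by (simp add: inner_vec_def mult.commute)
    finally show ?thesis .
  qed
  then show ?thesis by (simp add: vec_eq_iff a_def)
qed

lemma chain_grad:
  assumes "smooth S" "\<gamma> 0 = x" "(\<gamma> has_vector_derivative v) (at 0)"
  shows "((S \<circ> \<gamma>) has_real_derivative (grad S x \<bullet> v)) (at 0)"
proof -
  have g: "(\<gamma> has_derivative (\<lambda>h. h *\<^sub>R v)) (at 0)"
    using assms(3) by (simp add: has_vector_derivative_def)
  have "(S has_derivative (\<lambda>h. grad S x \<bullet> h)) (at (\<gamma> 0))"
    using grad_deriv[OF assms(1)] assms(2) by simp
  from diff_chain_at[OF g this]
  have "((S \<circ> \<gamma>) has_derivative ((\<lambda>h. grad S x \<bullet> h) \<circ> (\<lambda>h. h *\<^sub>R v))) (at 0)" .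
  moreover have "((\<lambda>h. grad S x \<bullet> h) \<circ> (\<lambda>h. h *\<^sub>R v)) = (*) (grad S x \<bullet> v)"
    by (rule ext) (simp add: mult.commute)
  ultimately show ?thesis by (simp add: has_field_derivative_def)
qed

lemma curve_exists:
  fixes H :: "real^3 \<Rightarrow> real" and x v :: "real^3"
  assumes sH: "smooth H" and n0: "grad H x \<noteq> 0" and ort: "grad H x \<bullet> v = 0"
  shows "\<exists>\<gamma>. \<gamma> 0 = x \<and> (\<forall>t. H (\<gamma> t) = H x) \<and> (\<gamma> has_vector_derivative v) (at 0)"
proof -
  define n where "n = grad H x"
  have nn: "n \<bullet> n > 0" using n0 n_def by simp
  have nnorm: "norm n > 0" using n0 n_def by simp
  define \<phi> where "\<phi> t s = H (x + t *\<^sub>R v + s *\<^sub>R n) - H x" for t s :: real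
  define R where "R t = cball 0 \<bar>t\<bar> \<inter> {s. \<phi> t s = 0}" for t :: real
  have contH: "continuous_on UNIV H" using smooth_cont[OF sH] .
  have cphi: "continuous_on UNIV (\<phi> t)" for t
    unfolding \<phi>_def
    by (intro continuous_intros continuous_on_compose2[OF contH]) auto
  have dH: "(H has_derivative (\<lambda>h. n \<bullet> h)) (at x)"
    using grad_deriv[OF sH] n_def by simp
  have key: "\<exists>d>0. \<forall>t. 0 < \<bar>t\<bar> \<and> \<bar>t\<bar> < d \<longrightarrow> (\<exists>s\<in>R t. \<bar>s\<bar> \<le> \<epsilon> * \<bar>t\<bar>)"
    if ep: "\<epsilon> > 0" "\<epsilon> \<le> 1" for \<epsilon>
  proof -
    define K where "K = norm v + norm n"
    have K: "K > 0" using nnorm K_def by (simp add: add_nonneg_pos)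
    define e' where "e' = \<epsilon> * (n \<bullet> n) / (2 * K)"
    have e': "e' > 0" using ep nn K by (simp add: e'_def)
    obtain d' where d': "d' > 0" and
      hd: "\<And>y. norm (y - x) < d' \<Longrightarrow> norm (H y - H x - n \<bullet> (y - x)) \<le> e' * norm (y - x)"
      using dH e' unfolding has_derivative_at_alt by blast
    have est: "\<bar>\<phi> t s - s * (n \<bullet> n)\<bar> \<le> \<epsilon> * (n \<bullet> n) * \<bar>t\<bar> / 2"
      if t: "\<bar>t\<bar> < d' / K" and s: "\<bar>s\<bar> \<le> \<epsilon> * \<bar>t\<bar>" for t s
    proof -
      have "\<bar>s\<bar> \<le> \<bar>t\<bar>" using s ep mult_left_le_one_le[of "\<bar>t\<bar>" \<epsilon>] by linarith
      have nrm: "norm ((x + t *\<^sub>R v + s *\<^sub>R n) - x) \<le> \<bar>t\<bar> * K"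
      proof -
        have "norm ((x + t *\<^sub>R v + s *\<^sub>R n) - x) \<le> \<bar>t\<bar> * norm v + \<bar>s\<bar> * norm n"
          by (simp add: norm_triangle_le)
        also have "\<dots> \<le> \<bar>t\<bar> * norm v + \<bar>t\<bar> * norm n"
          using \<open>\<bar>s\<bar> \<le> \<bar>t\<bar>\<close> by (simp add: mult_right_mono)
        finally show ?thesis by (simp add: K_def distrib_left)
      qed
      have "\<bar>t\<bar> * K < d'" using t K by (simp add: pos_less_divide_eq)
      then have "norm (H (x + t *\<^sub>R v + s *\<^sub>R n) - H x - n \<bullet> ((x + t *\<^sub>R v + s *\<^sub>R n) - x))
          \<le> e' * norm ((x + t *\<^sub>R v + s *\<^sub>R n) - x)"
        using nrm by (intro hd) linarith
      also have "\<dots> \<le> e' * (\<bar>t\<bar> * K)" using nrm e' by (simp add: mult_left_mono)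
      also have "\<dots> = \<epsilon> * (n \<bullet> n) * \<bar>t\<bar> / 2" using K by (simp add: e'_def)
      finally have "norm (H (x + t *\<^sub>R v + s *\<^sub>R n) - H x - n \<bullet> ((x + t *\<^sub>R v + s *\<^sub>R n) - x))
          \<le> \<epsilon> * (n \<bullet> n) * \<bar>t\<bar> / 2" .
      moreover have "n \<bullet> ((x + t *\<^sub>R v + s *\<^sub>R n) - x) = s * (n \<bullet> n)"
        using ort n_def by (simp add: inner_add_right)
      ultimately show ?thesis by (simp add: \<phi>_def)
    qed
    show ?thesis
    proof (intro exI[of _ "d' / K"] conjI allI impI)
      show "d' / K > 0" using d' K by simp
      fix t :: real assume "0 < \<bar>t\<bar> \<and> \<bar>t\<bar> < d' / K"
      then have t0: "0 < \<bar>t\<bar>" and t: "\<bar>t\<bar> < d' / K" by auto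
      have p: "\<epsilon> * (n \<bullet> n) * \<bar>t\<bar> > 0" using ep nn t0 by simp
      have a: "\<phi> t (- (\<epsilon> * \<bar>t\<bar>)) \<le> 0"
      proof -
        have "\<bar>\<phi> t (- (\<epsilon> * \<bar>t\<bar>)) - (- (\<epsilon> * \<bar>t\<bar>)) * (n \<bullet> n)\<bar> \<le> \<epsilon> * (n \<bullet> n) * \<bar>t\<bar> / 2"
          using est[OF t, of "- (\<epsilon> * \<bar>t\<bar>)"] ep by simp
        moreover have "(- (\<epsilon> * \<bar>t\<bar>)) * (n \<bullet> n) = - (\<epsilon> * (n \<bullet> n) * \<bar>t\<bar>)" by simp
        ultimately show ?thesis using p by linarith
      qed
      have b: "0 \<le> \<phi> t (\<epsilon> * \<bar>t\<bar>)"
      proof -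
        have "\<bar>\<phi> t (\<epsilon> * \<bar>t\<bar>) - (\<epsilon> * \<bar>t\<bar>) * (n \<bullet> n)\<bar> \<le> \<epsilon> * (n \<bullet> n) * \<bar>t\<bar> / 2"
          using est[OF t, of "\<epsilon> * \<bar>t\<bar>"] ep by simp
        moreover have "(\<epsilon> * \<bar>t\<bar>) * (n \<bullet> n) = \<epsilon> * (n \<bullet> n) * \<bar>t\<bar>" by simp
        ultimately show ?thesis using p by linarith
      qed
      obtain s where s: "- (\<epsilon> * \<bar>t\<bar>) \<le> s" "s \<le> \<epsilon> * \<bar>t\<bar>" "\<phi> t s = 0"
        using IVT'[OF a b _ continuous_on_subset[OF cphi]] ep by fastforce
      have "\<bar>s\<bar> \<le> \<epsilon> * \<bar>t\<bar>" using s by simp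
      moreover have "\<epsilon> * \<bar>t\<bar> \<le> \<bar>t\<bar>" using ep by (simp add: mult_left_le_one_le)
      ultimately have "s \<in> R t" using s by (simp add: R_def dist_real_def)
      then show "\<exists>s\<in>R t. \<bar>s\<bar> \<le> \<epsilon> * \<bar>t\<bar>" using \<open>\<bar>s\<bar> \<le> \<epsilon> * \<bar>t\<bar>\<close> by blast
    qed
  qed
  have Rmin: "\<exists>s\<in>R t. \<forall>s'\<in>R t. \<bar>s\<bar> \<le> \<bar>s'\<bar>" if "R t \<noteq> {}" for t
  proof -
    have "closed {s. \<phi> t s = 0}"
      using closed_Collect_eq[OF cphi continuous_on_const] .
    then have "compact (R t)" unfolding R_def by (intro compact_Int_closed) auto
    then show ?thesis
      using continuous_attains_inf[OF _ that, of abs] continuous_on_rabs[OF continuous_on_id] by auto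
  qed
  define \<sigma> where "\<sigma> t = (if R t \<noteq> {} then (SOME s. s \<in> R t \<and> (\<forall>s'\<in>R t. \<bar>s\<bar> \<le> \<bar>s'\<bar>)) else 0)" for t
  have sig: "\<sigma> t \<in> R t \<and> (\<forall>s'\<in>R t. \<bar>\<sigma> t\<bar> \<le> \<bar>s'\<bar>)" if "R t \<noteq> {}" for t
  proof -
    have "\<exists>s. s \<in> R t \<and> (\<forall>s'\<in>R t. \<bar>s\<bar> \<le> \<bar>s'\<bar>)" using Rmin[OF that] by blast
    from someI_ex[OF this] show ?thesis using that by (simp add: \<sigma>_def)
  qed
  define \<gamma> where "\<gamma> t = (if R t \<noteq> {} then x + t *\<^sub>R v + \<sigma> t *\<^sub>R n else x)" for t
  have R0: "0 \<in> R 0" by (simp add: R_def \<phi>_def)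
  then have "\<sigma> 0 \<in> R 0" using sig by blast
  then have "\<sigma> 0 = 0" by (simp add: R_def)
  then have g0: "\<gamma> 0 = x" using R0 by (auto simp: \<gamma>_def)
  have gH: "H (\<gamma> t) = H x" for t
  proof (cases "R t = {}")
    case False
    then have "\<phi> t (\<sigma> t) = 0" using sig[OF False] by (simp add: R_def)
    then show ?thesis using False by (simp add: \<gamma>_def \<phi>_def)
  qed (simp add: \<gamma>_def)
  have gd: "(\<gamma> has_vector_derivative v) (at 0)"
    unfolding has_vector_derivative_def has_derivative_at_alt
  proof (intro conjI allI impI bounded_linear_scaleR_left)
    fix e :: real assume e: "e > 0"
    define \<epsilon> where "\<epsilon> = min 1 (e / norm n)"
    have ep: "\<epsilon> > 0" "\<epsilon> \<le> 1" using e nnorm by (auto simp: \<epsilon>_def)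
    obtain d where d: "d > 0" and hd: "\<And>t. 0 < \<bar>t\<bar> \<and> \<bar>t\<bar> < d \<Longrightarrow> \<exists>s\<in>R t. \<bar>s\<bar> \<le> \<epsilon> * \<bar>t\<bar>"
      using key[OF ep] by blast
    show "\<exists>d>0. \<forall>y. norm (y - 0) < d \<longrightarrow> norm (\<gamma> y - \<gamma> 0 - (y - 0) *\<^sub>R v) \<le> e * norm (y - 0)"
    proof (intro exI[of _ d] conjI allI impI d)
      fix y :: real assume y: "norm (y - 0) < d"
      show "norm (\<gamma> y - \<gamma> 0 - (y - 0) *\<^sub>R v) \<le> e * norm (y - 0)"
      proof (cases "y = 0")
        case True then show ?thesis by simp
      next
        case False
        then have "0 < \<bar>y\<bar> \<and> \<bar>y\<bar> < d" using y by simp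
        then obtain s where s: "s \<in> R y" "\<bar>s\<bar> \<le> \<epsilon> * \<bar>y\<bar>" using hd by blast
        then have ne: "R y \<noteq> {}" by auto
        have "\<bar>\<sigma> y\<bar> \<le> \<bar>s\<bar>" using sig[OF ne] s(1) by blast
        then have "\<bar>\<sigma> y\<bar> \<le> \<epsilon> * \<bar>y\<bar>" using s(2) by linarith
        have "\<gamma> y - \<gamma> 0 - (y - 0) *\<^sub>R v = \<sigma> y *\<^sub>R n" using ne g0 by (simp add: \<gamma>_def)
        then have "norm (\<gamma> y - \<gamma> 0 - (y - 0) *\<^sub>R v) = \<bar>\<sigma> y\<bar> * norm n" by simp
        also have "\<dots> \<le> \<epsilon> * \<bar>y\<bar> * norm n"
          using \<open>\<bar>\<sigma> y\<bar> \<le> \<epsilon> * \<bar>y\<bar>\<close> by (simp add: mult_right_mono)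
        also have "\<dots> \<le> (e / norm n) * \<bar>y\<bar> * norm n"
          by (intro mult_right_mono) (simp_all add: \<epsilon>_def)
        also have "\<dots> = e * norm (y - 0)" using nnorm by simp
        finally show ?thesis .
      qed
    qed
  qed
  show ?thesis using g0 gH gd by blast
qed

theorem mainTheorem6:
  fixes P :: "real^3 \<Rightarrow> real^3^3" and H S :: "real^3 \<Rightarrow> real" and x :: "real^3"
  assumes "poisson_tensor P"
    and "smooth H"
    and "smooth S"
    and "\<forall>y. P y *v grad S y = 0"
  shows "(P x *v grad H x + gtensor H x *v grad S x = P x *v grad H x)
         \<longleftrightarrow> (grad H x = 0 \<or> crit_on_level S H x)"
proof -
  define n where "n = grad H x"
  define w where "w = grad S x"
  have "(P x *v grad H x + gtensor H x *v grad S x = P x *v grad H x)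
      \<longleftrightarrow> (n \<bullet> w) *\<^sub>R n = (n \<bullet> n) *\<^sub>R w"
    by (simp add: gt n_def w_def)
  also have "\<dots> \<longleftrightarrow> (n = 0 \<or> crit_on_level S H x)"
  proof (cases "n = 0")
    case True then show ?thesis by simp
  next
    case False
    have nn: "n \<bullet> n > 0" using False by simp
    show ?thesis
    proof
      assume eq: "(n \<bullet> w) *\<^sub>R n = (n \<bullet> n) *\<^sub>R w"
      have "crit_on_level S H x"
        unfolding crit_on_level_def
      proof (intro allI impI)
        fix \<gamma> v assume h: "\<gamma> 0 = x \<and> (\<forall>t. H (\<gamma> t) = H x) \<and> (\<gamma> has_vector_derivative v) (at 0)"
        have c1: "((H \<circ> \<gamma>) has_real_derivative (n \<bullet> v)) (at 0)"
          using chain_grad[OF assms(2)] h n_def by blast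
        have "H \<circ> \<gamma> = (\<lambda>t. H x)" using h by (auto simp: fun_eq_iff)
        then have c2: "((H \<circ> \<gamma>) has_real_derivative 0) (at 0)" by simp
        have nv: "n \<bullet> v = 0" using DERIV_unique[OF c1 c2] .
        have "(n \<bullet> n) * (w \<bullet> v) = ((n \<bullet> n) *\<^sub>R w) \<bullet> v" by simp
        also have "\<dots> = ((n \<bullet> w) *\<^sub>R n) \<bullet> v" using eq by simp
        also have "\<dots> = 0" using nv by simp
        finally have "w \<bullet> v = 0" using nn by simp
        moreover have "((S \<circ> \<gamma>) has_real_derivative (w \<bullet> v)) (at 0)"
          using chain_grad[OF assms(3)] h w_def by blast
        ultimately show "((S \<circ> \<gamma>) has_real_derivative 0) (at 0)" by simp
      qed
      then show "n = 0 \<or> crit_on_level S H x" by simp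
    next
      assume "n = 0 \<or> crit_on_level S H x"
      then have cr: "crit_on_level S H x" using False by simp
      define v where "v = (n \<bullet> n) *\<^sub>R w - (n \<bullet> w) *\<^sub>R n"
      have nv: "grad H x \<bullet> v = 0" by (simp add: v_def n_def[symmetric] inner_diff_right algebra_simps)
      obtain \<gamma> where h: "\<gamma> 0 = x" "\<forall>t. H (\<gamma> t) = H x" "(\<gamma> has_vector_derivative v) (at 0)"
        using curve_exists[OF assms(2) _ nv] False n_def by blast
      have "((S \<circ> \<gamma>) has_real_derivative 0) (at 0)" using cr h unfolding crit_on_level_def by blast
      moreover have "((S \<circ> \<gamma>) has_real_derivative (w \<bullet> v)) (at 0)"
        using chain_grad[OF assms(3)] h w_def by blast
      ultimately have wv: "w \<bullet> v = 0" using DERIV_unique by blast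
      have "v \<bullet> v = (n \<bullet> n) * (w \<bullet> v) - (n \<bullet> w) * (n \<bullet> v)"
        by (simp add: v_def inner_diff_left inner_diff_right inner_commute[of w n] algebra_simps)
      also have "\<dots> = 0" using wv nv n_def by simp
      finally have "v = 0" by simp
      then show "(n \<bullet> w) *\<^sub>R n = (n \<bullet> n) *\<^sub>R w" by (simp add: v_def)
    qed
  qed
  finally show ?thesis by (simp add: n_def)
qed

end
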